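(* Let $\vartheta$ be a primitive semi-compatible random substitution with PF eigenvalue $\lambda$, let $K=\max_{1\leqslant i\leqslant n}\ell_{1,i}$, and for $N\in\mathbb N$ let $I_N=\vartheta(\mathcal L)\cap\mathcal L_N$. For every $\varepsilon>0$ with $\lambda>\varepsilon nK$ there is $N_0\in\mathbb N$ such that for all $N\geqslant N_0$, \[ I_N\;\subset\;\bigcup_{m=\lceil N/(\lambda+\varepsilon nK)\rceil}^{\lfloor N/(\lambda-\varepsilon nK)\rfloor}\vartheta(\mathcal L_m). \]
   Context: Let $\mathcal A=\{a_1,\dots,a_n\}$ be a finite alphabet ($n=\#\mathcal A$), $\mathcal A^+$ the finite non-empty words over $\mathcal A$. A random substitution is a map $\vartheta$ from $\mathcal A$ to finite non-empty subsets of $\mathcal A^+$, extended to words by $\vartheta(u_1\cdots u_m)=\{w_1\cdots w_m: w_k\in\vartheta(u_k)\}$ and to sets of words by unions; powers $\vartheta^m$ are compositions. $|u|$ is the length and $|u|_a$ the number of occurrences of letter $a$ in $u$; $\Phi(u)=(|u|_{a_1},\dots,|u|_{a_n})^\intercal$. $\vartheta$ is semi-compatible if for each $a$ all words in $\vartheta(a)$ have the same $\Phi$; then all words in $\vartheta(a_i)$ have common length $\ell_{1,i}$. Substitution matrix: $M_{ij}=|u|_{a_i}$, $u\in\vartheta(a_j)$; $\vartheta$ is primitive if $M$ is primitive, with Perron–Frobenius eigenvalue $\lambda$. The language $\mathcal L$ is the set of all subwords of words in $\vartheta^m(a)$, $a\in\mathcal A$, $m\in\mathbb N$, and $\mathcal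 L_\ell=\{v\in\mathcal L:|v|=\ell\}$. *)

theory Defs
  imports Complex_Main "HOL-Library.Sublist"
begin

text \<open>Alphabet = finite type 'a (so n = CARD('a)); words = lists over 'a.
  A random substitution maps each letter to a set of words.\<close>

definition random_substitution :: "('a \<Rightarrow> 'a list set) \<Rightarrow> bool" where
  "random_substitution \<theta> \<longleftrightarrow> (\<forall>a. finite (\<theta> a) \<and> \<theta> a \<noteq> {} \<and> [] \<notin> \<theta> a)"

fun subst_word :: "('a \<Rightarrow> 'a list set) \<Rightarrow> 'a list \<Rightarrow> 'a list set" where
  "subst_word \<theta> [] = {[]}"
| "subst_word \<theta> (x # xs) = {w @ v | w v. w \<in> \<theta> x \<and> v \<in> subst_word \<theta> xs}"

definition subst_set :: "('a \<Rightarrow> 'a list set) \<Rightarrow> 'a list set \<Rightarrow> 'a list set" where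
  "subst_set \<theta> S = (\<Union>u\<in>S. subst_word \<theta> u)"

definition subst_pow :: "('a \<Rightarrow> 'a list set) \<Rightarrow> nat \<Rightarrow> 'a \<Rightarrow> 'a list set" where
  "subst_pow \<theta> m a = (subst_set \<theta> ^^ m) {[a]}"

definition semi_compatible :: "('a \<Rightarrow> 'a list set) \<Rightarrow> bool" where
  "semi_compatible \<theta> \<longleftrightarrow>
     (\<forall>a u v. u \<in> \<theta> a \<longrightarrow> v \<in> \<theta> a \<longrightarrow> (\<forall>b. count_list u b = count_list v b))"

text \<open>Common length l_{1,a} of the words in theta(a).\<close>
definition ell1 :: "('a \<Rightarrow> 'a list set) \<Rightarrow> 'a \<Rightarrow> nat" where
  "ell1 \<theta> a = length (SOME u. u \<in> \<theta> a)"

definition subst_matrix :: "('a \<Rightarrow> 'a list set) \<Rightarrow> 'a \<Rightarrow> 'a \<Rightarrow> nat" where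
  "subst_matrix \<theta> b a = count_list (SOME u. u \<in> \<theta> a) b"

fun mat_pow :: "('a::finite \<Rightarrow> 'a \<Rightarrow> nat) \<Rightarrow> nat \<Rightarrow> 'a \<Rightarrow> 'a \<Rightarrow> nat" where
  "mat_pow M 0 = (\<lambda>i j. if i = j then 1 else 0)"
| "mat_pow M (Suc k) = (\<lambda>i j. \<Sum>l\<in>UNIV. mat_pow M k i l * M l j)"

definition primitive_matrix :: "('a::finite \<Rightarrow> 'a \<Rightarrow> nat) \<Rightarrow> bool" where
  "primitive_matrix M \<longleftrightarrow> (\<exists>k>0. \<forall>i j. mat_pow M k i j > 0)"

definition primitive_subst :: "('a::finite \<Rightarrow> 'a list set) \<Rightarrow> bool" where
  "primitive_subst \<theta> \<longleftrightarrow> primitive_matrix (subst_matrix \<theta>)"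

definition is_eigenvalue :: "('a::finite \<Rightarrow> 'a \<Rightarrow> nat) \<Rightarrow> complex \<Rightarrow> bool" where
  "is_eigenvalue M \<mu> \<longleftrightarrow>
     (\<exists>v :: 'a \<Rightarrow> complex. v \<noteq> (\<lambda>_. 0) \<and> (\<forall>i. (\<Sum>j\<in>UNIV. of_nat (M i j) * v j) = \<mu> * v i))"

text \<open>Perron-Frobenius eigenvalue = spectral radius (dominant eigenvalue) of a primitive matrix.\<close>
definition pf_eigenvalue :: "('a::finite \<Rightarrow> 'a \<Rightarrow> nat) \<Rightarrow> real" where
  "pf_eigenvalue M = Sup {cmod \<mu> | \<mu>. is_eigenvalue M \<mu>}"

definition language :: "('a \<Rightarrow> 'a list set) \<Rightarrow> 'a list set" where
  "language \<theta> = {v. v \<noteq> [] \<and> (\<exists>a m w. w \<in> subst_pow \<theta> m a \<and> sublist v w)}"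

definition language_len :: "('a \<Rightarrow> 'a list set) \<Rightarrow> nat \<Rightarrow> 'a list set" where
  "language_len \<theta> l = {v \<in> language \<theta>. length v = l}"

end

theory Submission
  imports Defs "HOL-Analysis.Analysis"
begin

lemma mat_assoc:
  "mat_pow M (a + b) i j = (\<Sum>l\<in>UNIV. mat_pow M a i l * mat_pow M b l j)"
proof (induction b arbitrary: j)
  case 0
  then show ?case by (simp add: if_distrib cong: if_cong)
next
  case (Suc b)
  have "mat_pow M (a + Suc b) i j = (\<Sum>m\<in>UNIV. mat_pow M (a+b) i m * M m j)" by simp
  also have "\<dots> = (\<Sum>m\<in>UNIV. (\<Sum>l\<in>UNIV. mat_pow M a i l * mat_pow M b l m) * M m j)"
    using Suc by simp
  also have "\<dots> = (\<Sum>m\<in>UNIV. \<Sum>l\<in>UNIV. mat_pow M a i l * (mat_pow M b l m * M m j))"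
    by (simp add: sum_distrib_right mult.assoc)
  also have "\<dots> = (\<Sum>l\<in>UNIV. \<Sum>m\<in>UNIV. mat_pow M a i l * (mat_pow M b l m * M m j))"
    by (rule sum.swap)
  also have "\<dots> = (\<Sum>l\<in>UNIV. mat_pow M a i l * (\<Sum>m\<in>UNIV. mat_pow M b l m * M m j))"
    by (simp add: sum_distrib_left)
  finally show ?case by simp
qed

lemma length_count: "length (xs::'a::finite list) = (\<Sum>b\<in>UNIV. count_list xs b)"
proof (induction xs)
  case Nil then show ?case by simp
next
  case (Cons x xs)
  have "(\<Sum>b\<in>UNIV. count_list (x#xs) b) = (\<Sum>b\<in>UNIV. (if x = b then 1 else 0) + count_list xs b)"
    by (rule sum.cong) auto
  also have "\<dots> = 1 + (\<Sum>b\<in>UNIV. count_list xs b)" by (simp add: sum.distrib)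
  finally show ?case using Cons by simp
qed

definition W :: "('a \<Rightarrow> 'a list set) \<Rightarrow> nat \<Rightarrow> 'a list \<Rightarrow> 'a list set" where
  "W \<theta> k x = (subst_set \<theta> ^^ k) {x}"

lemma funpow_distrib: "(subst_set \<theta> ^^ k) S = (\<Union>x\<in>S. W \<theta> k x)"
proof (induction k arbitrary: S)
  case 0 then show ?case by (simp add: W_def)
next
  case (Suc k)
  have "(subst_set \<theta> ^^ Suc k) S = subst_set \<theta> ((subst_set \<theta> ^^ k) S)" by simp
  also have "\<dots> = subst_set \<theta> (\<Union>x\<in>S. W \<theta> k x)" by (simp only: Suc)
  also have "\<dots> = (\<Union>x\<in>S. subst_set \<theta> (W \<theta> k x))" by (auto simp: subst_set_def)
  also have "\<dots> = (\<Union>x\<in>S. W \<theta> (Suc k) x)" by (simp add: W_def)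
  finally show ?case .
qed

lemma W_Suc_right: "W \<theta> (Suc k) x = (\<Union>y\<in>subst_word \<theta> x. W \<theta> k y)"
proof -
  have "W \<theta> (Suc k) x = (subst_set \<theta> ^^ k) (subst_set \<theta> {x})"
    by (simp add: W_def funpow_Suc_right del: funpow.simps)
  also have "\<dots> = (\<Union>y\<in>subst_word \<theta> x. W \<theta> k y)" by (simp add: funpow_distrib subst_set_def)
  finally show ?thesis .
qed

lemma W_Suc: "W \<theta> (Suc k) x = subst_set \<theta> (W \<theta> k x)"
  by (simp add: W_def)

lemma block_count:
  assumes rs: "random_substitution \<theta>" and sc: "semi_compatible \<theta>" and w: "w \<in> \<theta> e"
  shows "count_list w d = subst_matrix \<theta> d e"
proof -
  have ne: "\<theta> e \<noteq> {}" using rs by (simp add: random_substitution_def)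
  have "(SOME u. u \<in> \<theta> e) \<in> \<theta> e" using ne by (simp add: some_in_eq)
  then show ?thesis using sc w unfolding semi_compatible_def subst_matrix_def by metis
qed

lemma step_count:
  assumes rs: "random_substitution \<theta>" and sc: "semi_compatible \<theta>"
  shows "y \<in> subst_word \<theta> x \<Longrightarrow> count_list y d = (\<Sum>e\<in>UNIV. count_list x e * subst_matrix \<theta> d (e::'a::finite))"
proof (induction x arbitrary: y)
  case Nil then show ?case by simp
next
  case (Cons a xs)
  then obtain w v where y: "y = w @ v" and w: "w \<in> \<theta> a" and v: "v \<in> subst_word \<theta> xs" by auto
  have "count_list y d = subst_matrix \<theta> d a + (\<Sum>e\<in>UNIV. count_list xs e * subst_matrix \<theta> d e)"
    using block_count[OF rs sc w] Cons.IH[OF v] y by simp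
  also have "\<dots> = (\<Sum>e\<in>UNIV. (if a = e then subst_matrix \<theta> d e else 0) + count_list xs e * subst_matrix \<theta> d e)"
    by (simp add: sum.distrib)
  also have "\<dots> = (\<Sum>e\<in>UNIV. count_list (a#xs) e * subst_matrix \<theta> d e)"
    by (rule sum.cong) auto
  finally show ?case .
qed

lemma W_count:
  assumes rs: "random_substitution \<theta>" and sc: "semi_compatible \<theta>"
  shows "w \<in> W \<theta> k x \<Longrightarrow> count_list w b = (\<Sum>d\<in>UNIV. count_list x d * mat_pow (subst_matrix \<theta>) k b (d::'a::finite))"
proof (induction k arbitrary: x w)
  case 0
  then have "w = x" by (simp add: W_def)
  moreover have "(\<Sum>d\<in>UNIV. count_list x d * mat_pow (subst_matrix \<theta>) 0 b d) = (\<Sum>d\<in>UNIV. if d = b then count_list x d else 0)"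
    by (rule sum.cong) auto
  ultimately show ?case by simp
next
  case (Suc k)
  let ?M = "subst_matrix \<theta>"
  from Suc.prems obtain y where y: "y \<in> subst_word \<theta> x" and wy: "w \<in> W \<theta> k y"
    by (auto simp: W_Suc_right)
  have "count_list w b = (\<Sum>d\<in>UNIV. count_list y d * mat_pow ?M k b d)" using Suc.IH[OF wy] .
  also have "\<dots> = (\<Sum>d\<in>UNIV. (\<Sum>e\<in>UNIV. count_list x e * ?M d e) * mat_pow ?M k b d)"
    using step_count[OF rs sc y] by simp
  also have "\<dots> = (\<Sum>d\<in>UNIV. \<Sum>e\<in>UNIV. count_list x e * (mat_pow ?M k b d * ?M d e))"
    by (rule sum.cong[OF refl], subst mult.commute, subst sum_distrib_left, rule sum.cong[OF refl], simp add: ac_simps)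
  also have "\<dots> = (\<Sum>e\<in>UNIV. \<Sum>d\<in>UNIV. count_list x e * (mat_pow ?M k b d * ?M d e))"
    by (rule sum.swap)
  also have "\<dots> = (\<Sum>e\<in>UNIV. count_list x e * (\<Sum>d\<in>UNIV. mat_pow ?M k b d * ?M d e))"
    by (simp add: sum_distrib_left)
  finally show ?case by simp
qed

lemma subst_word_append:
  "y \<in> subst_word \<theta> (x1 @ x2) \<Longrightarrow> \<exists>a b. y = a @ b \<and> a \<in> subst_word \<theta> x1 \<and> b \<in> subst_word \<theta> x2"
proof (induction x1 arbitrary: y)
  case Nil then show ?case by force
next
  case (Cons c xs)
  then obtain w v where "y = w @ v" "w \<in> \<theta> c" "v \<in> subst_word \<theta> (xs @ x2)" by auto
  with Cons.IH obtain a b where "v = a @ b" "a \<in> subst_word \<theta> xs" "b \<in> subst_word \<theta> x2" by blast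
  then show ?case using \<open>y = w @ v\<close> \<open>w \<in> \<theta> c\<close> by (intro exI[of _ "w @ a"] exI[of _ b]) auto
qed

lemma subst_word_concat:
  "w \<in> subst_word \<theta> (concat xs) \<Longrightarrow> \<exists>bs. w = concat bs \<and> list_all2 (\<lambda>b x. b \<in> subst_word \<theta> x) bs xs"
proof (induction xs arbitrary: w)
  case Nil then show ?case by simp
next
  case (Cons x xs)
  then obtain a b where "w = a @ b" "a \<in> subst_word \<theta> x" "b \<in> subst_word \<theta> (concat xs)"
    using subst_word_append by (metis concat.simps(2))
  with Cons.IH obtain bs where "b = concat bs" "list_all2 (\<lambda>b x. b \<in> subst_word \<theta> x) bs xs" by blast
  then show ?case using \<open>w = a @ b\<close> \<open>a \<in> subst_word \<theta> x\<close> by (intro exI[of _ "a # bs"]) auto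
qed

lemma list_all2_set: "list_all2 P bs xs \<Longrightarrow> b \<in> set bs \<Longrightarrow> \<exists>x\<in>set xs. P b x"
  by (induction bs xs rule: list_all2_induct) auto

lemma W_blocks:
  "w \<in> W \<theta> k v \<Longrightarrow> \<exists>ws. w = concat ws \<and> (\<forall>b\<in>set ws. \<exists>c. b \<in> W \<theta> k [c])"
proof (induction k arbitrary: w)
  case 0
  then have "w = v" by (simp add: W_def)
  then show ?case by (intro exI[of _ "map (\<lambda>c. [c]) v"]) (auto simp: W_def)
next
  case (Suc k)
  then obtain w' where w: "w \<in> subst_word \<theta> w'" and w': "w' \<in> W \<theta> k v"
    by (auto simp: W_Suc subst_set_def)
  from Suc.IH[OF w'] obtain ws' where ws': "w' = concat ws'" "\<forall>b\<in>set ws'. \<exists>c. b \<in> W \<theta> k [c]" by blast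
  from subst_word_concat[of w \<theta> ws'] w ws' obtain bs where
    bs: "w = concat bs" "list_all2 (\<lambda>b x. b \<in> subst_word \<theta> x) bs ws'" by blast
  have "\<forall>b\<in>set bs. \<exists>c. b \<in> W \<theta> (Suc k) [c]"
  proof
    fix b assume "b \<in> set bs"
    then obtain x where "x \<in> set ws'" "b \<in> subst_word \<theta> x" using list_all2_set[OF bs(2)] by blast
    then obtain c where "x \<in> W \<theta> k [c]" using ws' by blast
    then have "b \<in> W \<theta> (Suc k) [c]" using \<open>b \<in> subst_word \<theta> x\<close> by (auto simp: W_Suc subst_set_def)
    then show "\<exists>c. b \<in> W \<theta> (Suc k) [c]" by blast
  qed
  then show ?case using bs by blast
qed

lemma prefix_concat:
  assumes "\<forall>b\<in>set ws. length b \<le> D"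
  shows "prefix y (concat ws) \<Longrightarrow> \<exists>ws' s. y = concat ws' @ s \<and> set ws' \<subseteq> set ws \<and> length s \<le> D"
  using assms
proof (induction ws arbitrary: y)
  case Nil then show ?case by (intro exI[of _ "[]"] exI[of _ "[]"]) auto
next
  case (Cons b bs)
  from Cons.prems(1) have "prefix y b \<or> (\<exists>us. y = b @ us \<and> prefix us (concat bs))"
    by (simp add: prefix_append)
  then show ?case
  proof
    assume "prefix y b"
    then have "length y \<le> D" using Cons.prems(2) prefix_length_le by fastforce
    then show ?thesis by (intro exI[of _ "[]"] exI[of _ y]) auto
  next
    assume "\<exists>us. y = b @ us \<and> prefix us (concat bs)"
    then obtain us where "y = b @ us" "prefix us (concat bs)" by blast
    have "\<exists>ws' s. us = concat ws' @ s \<and> set ws' \<subseteq> set bs \<and> length s \<le> D"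
      using Cons.IH Cons.prems(2) \<open>prefix us (concat bs)\<close> by auto
    then obtain ws' s where "us = concat ws' @ s" "set ws' \<subseteq> set bs" "length s \<le> D"
      by blast
    then show ?thesis using \<open>y = b @ us\<close> by (intro exI[of _ "b # ws'"] exI[of _ s]) auto
  qed
qed

lemma sublist_concat:
  assumes "\<forall>b\<in>set ws. length b \<le> D"
  shows "sublist u (concat ws) \<Longrightarrow> \<exists>p ws' s. u = p @ concat ws' @ s \<and> length p \<le> D \<and> length s \<le> D \<and> set ws' \<subseteq> set ws"
  using assms
proof (induction ws arbitrary: u)
  case Nil
  then have "u = []" by simp
  then show ?case by (intro exI[of _ "[]"] exI[of _ "[]"] exI[of _ "[]"]) auto
next
  case (Cons b bs)
  from Cons.prems(1) have "sublist u b \<or> sublist u (concat bs) \<or> (\<exists>x1 x2. u = x1 @ x2 \<and> suffix x1 b \<and> prefix x2 (concat bs))"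
    by (simp add: sublist_append)
  moreover {
    assume "sublist u b"
    then have "length u \<le> D" using Cons.prems(2) sublist_length_le by fastforce
    then have ?case by (intro exI[of _ u] exI[of _ "[]"] exI[of _ "[]"]) auto }
  moreover {
    assume "sublist u (concat bs)"
    with Cons.IH Cons.prems(2) have ?case by fastforce }
  moreover {
    assume "\<exists>x1 x2. u = x1 @ x2 \<and> suffix x1 b \<and> prefix x2 (concat bs)"
    then obtain x1 x2 where "u = x1 @ x2" "suffix x1 b" "prefix x2 (concat bs)" by blast
    from prefix_concat[of bs D x2] Cons.prems(2) \<open>prefix x2 (concat bs)\<close>
    obtain ws' s where "x2 = concat ws' @ s" "set ws' \<subseteq> set bs" "length s \<le> D" by auto
    moreover have "length x1 \<le> D" using \<open>suffix x1 b\<close> Cons.prems(2) suffix_length_le by fastforce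
    ultimately have ?case using \<open>u = x1 @ x2\<close> by (intro exI[of _ x1] exI[of _ ws'] exI[of _ s]) auto }
  ultimately show ?case by blast
qed

definition F :: "('a::finite \<Rightarrow> 'a list set) \<Rightarrow> 'a list \<Rightarrow> nat" where
  "F \<theta> x = (\<Sum>e\<in>UNIV. count_list x e * ell1 \<theta> e)"

lemma F_append: "F \<theta> (x @ y) = F \<theta> x + F \<theta> y"
  by (simp add: F_def distrib_right sum.distrib)

lemma F_Cons: "F \<theta> (a # x) = ell1 \<theta> a + F \<theta> x"
proof -
  have "F \<theta> (a # x) = F \<theta> [a] + F \<theta> x" using F_append[of \<theta> "[a]" x] by simp
  moreover have "F \<theta> [a] = ell1 \<theta> a"
  proof -
    have "F \<theta> [a] = (\<Sum>e\<in>UNIV. if e = a then ell1 \<theta> e else 0)"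
      unfolding F_def by (rule sum.cong) auto
    then show ?thesis by simp
  qed
  ultimately show ?thesis by simp
qed

lemma F_le: "F \<theta> x \<le> Max (range (ell1 \<theta>)) * length x"
proof -
  have "F \<theta> x \<le> (\<Sum>e\<in>UNIV. count_list x e * Max (range (ell1 \<theta>)))"
    unfolding F_def by (rule sum_mono) auto
  also have "\<dots> = Max (range (ell1 \<theta>)) * length x"
    by (simp add: length_count sum_distrib_right mult.commute)
  finally show ?thesis .
qed

lemma ell1_length:
  assumes rs: "random_substitution \<theta>" and sc: "semi_compatible \<theta>" and w: "w \<in> \<theta> e"
  shows "length w = ell1 \<theta> (e::'a::finite)"
proof -
  have ne: "\<theta> e \<noteq> {}" using rs by (simp add: random_substitution_def)
  have s: "(SOME u. u \<in> \<theta> e) \<in> \<theta> e" using ne by (simp add: some_in_eq)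
  have "length w = (\<Sum>b\<in>UNIV. count_list w b)" by (rule length_count)
  also have "\<dots> = (\<Sum>b\<in>UNIV. count_list (SOME u. u \<in> \<theta> e) b)"
    using sc w s unfolding semi_compatible_def by metis
  also have "\<dots> = ell1 \<theta> e" by (simp add: ell1_def length_count)
  finally show ?thesis .
qed

lemma ell1_col:
  assumes rs: "random_substitution \<theta>"
  shows "ell1 \<theta> (e::'a::finite) = (\<Sum>d\<in>UNIV. subst_matrix \<theta> d e)"
  by (simp add: ell1_def subst_matrix_def length_count)

lemma ell1_pos:
  assumes rs: "random_substitution \<theta>"
  shows "ell1 \<theta> e > 0"
proof -
  have ne: "\<theta> e \<noteq> {}" "[] \<notin> \<theta> e" using rs by (auto simp: random_substitution_def)
  have s: "(SOME u. u \<in> \<theta> e) \<in> \<theta> e" using ne by (simp add: some_in_eq)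
  then have "(SOME u. u \<in> \<theta> e) \<noteq> []" using ne by metis
  then show ?thesis by (simp add: ell1_def)
qed

lemma subst_length:
  assumes rs: "random_substitution \<theta>" and sc: "semi_compatible \<theta>"
  shows "y \<in> subst_word \<theta> x \<Longrightarrow> length y = F \<theta> (x::'a::finite list)"
proof (induction x arbitrary: y)
  case Nil then show ?case by (simp add: F_def)
next
  case (Cons a xs)
  then obtain w v where "y = w @ v" "w \<in> \<theta> a" "v \<in> subst_word \<theta> xs" by auto
  then show ?case using Cons.IH ell1_length[OF rs sc] by (simp add: F_Cons)
qed

lemma subst_word_nonempty:
  assumes rs: "random_substitution \<theta>"
  shows "subst_word \<theta> x \<noteq> {}"
proof (induction x)
  case Nil then show ?case by simp
next
  case (Cons a xs)
  obtain w where "w \<in> \<theta> a" using rs by (auto simp: random_substitution_def)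
  moreover obtain v where "v \<in> subst_word \<theta> xs" using Cons by auto
  ultimately show ?case by auto
qed

lemma avg_bounds:
  fixes x a :: "'a::finite \<Rightarrow> real"
  assumes a: "\<forall>l. a l \<ge> 0" and ga: "\<forall>l. a l \<ge> g * (\<Sum>l\<in>UNIV. a l)"
    and lo: "\<forall>l. lo \<le> x l" and hi: "\<forall>l. x l \<le> hi"
    and l1: "x l1 = lo" and l2: "x l2 = hi"
  shows "(\<Sum>l\<in>UNIV. x l * a l) \<le> hi * (\<Sum>l\<in>UNIV. a l) - g * (hi - lo) * (\<Sum>l\<in>UNIV. a l)"
    and "(\<Sum>l\<in>UNIV. x l * a l) \<ge> lo * (\<Sum>l\<in>UNIV. a l) + g * (hi - lo) * (\<Sum>l\<in>UNIV. a l)"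
proof -
  let ?S = "\<Sum>l\<in>UNIV. a l"
  have "(\<Sum>l\<in>UNIV. x l * a l) = hi * ?S - (\<Sum>l\<in>UNIV. (hi - x l) * a l)"
    by (simp add: sum_distrib_left left_diff_distrib sum_subtractf)
  moreover have "(hi - x l1) * a l1 \<le> (\<Sum>l\<in>UNIV. (hi - x l) * a l)"
    by (rule member_le_sum) (use a hi in auto)
  moreover have "g * (hi - lo) * ?S \<le> (hi - x l1) * a l1"
  proof -
    have "lo \<le> hi" using lo hi by (meson order_trans)
    then have "(hi - lo) * (g * ?S) \<le> (hi - lo) * a l1" using ga by (intro mult_left_mono) auto
    then show ?thesis using l1 by (simp add: algebra_simps)
  qed
  ultimately show "(\<Sum>l\<in>UNIV. x l * a l) \<le> hi * ?S - g * (hi - lo) * ?S" by linarith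
next
  let ?S = "\<Sum>l\<in>UNIV. a l"
  have "(\<Sum>l\<in>UNIV. x l * a l) = lo * ?S + (\<Sum>l\<in>UNIV. (x l - lo) * a l)"
    by (simp add: sum_distrib_left left_diff_distrib sum_subtractf)
  moreover have "(x l2 - lo) * a l2 \<le> (\<Sum>l\<in>UNIV. (x l - lo) * a l)"
    by (rule member_le_sum) (use a lo in auto)
  moreover have "g * (hi - lo) * ?S \<le> (x l2 - lo) * a l2"
  proof -
    have "lo \<le> hi" using lo hi by (meson order_trans)
    then have "(hi - lo) * (g * ?S) \<le> (hi - lo) * a l2" using ga by (intro mult_left_mono) auto
    then show ?thesis using l2 by (simp add: algebra_simps)
  qed
  ultimately show "(\<Sum>l\<in>UNIV. x l * a l) \<ge> lo * ?S + g * (hi - lo) * ?S" by linarith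
qed

lemma div_bounds:
  fixes S N x h l :: real
  assumes "S > 0" "x = N / S" "N \<le> h * S" "l * S \<le> N"
  shows "l \<le> x \<and> x \<le> h"
  using assms by (simp add: divide_le_eq le_divide_eq)

lemma ratio_conv:
  fixes u :: "nat \<Rightarrow> 'a::finite \<Rightarrow> real" and B P :: "'a \<Rightarrow> 'a \<Rightarrow> real"
  assumes upos: "\<And>k c. u k c > 0"
    and Bnn: "\<And>l c. B l c \<ge> 0"
    and ustep: "\<And>k c. u (Suc k) c = (\<Sum>l\<in>UNIV. u k l * B l c)"
    and pmin: "pmin > 0" and Pbd: "\<And>l c. pmin \<le> P l c \<and> P l c \<le> pmax"
    and upstep: "\<And>k c. u (k + p) c = (\<Sum>l\<in>UNIV. u k l * P l c)"
  shows "\<exists>\<rho>. \<forall>\<epsilon>>0. \<exists>k0. \<forall>k\<ge>k0. \<forall>c. \<bar>u (Suc k) c / u k c - \<rho>\<bar> < \<epsilon>"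
proof -
  define r where "r k c = u (Suc k) c / u k c" for k c
  define hi where "hi k = Max (range (r k))" for k
  define lo where "lo k = Min (range (r k))" for k
  have hi_ge: "r k c \<le> hi k" for k c unfolding hi_def by (rule Max_ge) auto
  have lo_le: "lo k \<le> r k c" for k c unfolding lo_def by (rule Min_le) auto
  have hin: "hi k \<in> range (r k)" for k unfolding hi_def by (rule Max_in) auto
  have lon: "lo k \<in> range (r k)" for k unfolding lo_def by (rule Min_in) auto
  define chi where "chi k = (SOME c. r k c = hi k)" for k
  define clo where "clo k = (SOME c. r k c = lo k)" for k
  have chi: "r k (chi k) = hi k" for k
    unfolding chi_def by (rule someI_ex) (metis hin rangeE)
  have clo: "r k (clo k) = lo k" for k
    unfolding clo_def by (rule someI_ex) (metis lon rangeE)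
  have unext: "u (Suc k) l = r k l * u k l" for k l
    using upos[of k l] by (simp add: r_def)
  have mono1: "lo k \<le> r (Suc k) c \<and> r (Suc k) c \<le> hi k" for k c
  proof -
    define a where "a l = u k l * B l c" for l
    have S: "(\<Sum>l\<in>UNIV. a l) = u (Suc k) c" by (simp add: a_def ustep)
    have Spos: "(\<Sum>l\<in>UNIV. a l) > 0" using S upos by simp
    have num: "u (Suc (Suc k)) c = (\<Sum>l\<in>UNIV. r k l * a l)"
    proof -
      have "u (Suc (Suc k)) c = (\<Sum>l\<in>UNIV. u (Suc k) l * B l c)" by (rule ustep)
      also have "\<dots> = (\<Sum>l\<in>UNIV. r k l * a l)" by (simp only: unext a_def mult.assoc)
      finally show ?thesis .
    qed
    have ann: "\<forall>l. a l \<ge> 0" using upos Bnn by (simp add: a_def less_imp_le)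
    have b1: "(\<Sum>l\<in>UNIV. r k l * a l) \<le> hi k * (\<Sum>l\<in>UNIV. a l)"
      using avg_bounds(1)[of a 0 "lo k" "r k" "hi k" "clo k" "chi k"] ann hi_ge lo_le clo chi by simp
    have b2: "(\<Sum>l\<in>UNIV. r k l * a l) \<ge> lo k * (\<Sum>l\<in>UNIV. a l)"
      using avg_bounds(2)[of a 0 "lo k" "r k" "hi k" "clo k" "chi k"] ann hi_ge lo_le clo chi by simp
    have "r (Suc k) c = (\<Sum>l\<in>UNIV. r k l * a l) / (\<Sum>l\<in>UNIV. a l)"
      unfolding r_def num S ..
    then show ?thesis using div_bounds[OF Spos _ b1 b2] by blast
  qed
  have hi_dec: "hi (Suc k) \<le> hi k" for k using mono1 chi by metis
  have lo_inc: "lo k \<le> lo (Suc k)" for k using mono1 clo by metis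
  have hi_anti: "m \<le> k \<Longrightarrow> hi k \<le> hi m" for m k
    by (induction k rule: dec_induct) (use hi_dec order_trans in blast)+
  have lo_mono: "m \<le> k \<Longrightarrow> lo m \<le> lo k" for m k
    by (induction k rule: dec_induct) (use lo_inc order_trans in blast)+
  define D where "D k = hi k - lo k" for k
  have D_nn: "D k \<ge> 0" for k using hi_ge[of k] lo_le[of k] by (simp add: D_def) (meson order_trans)
  have D_anti: "m \<le> k \<Longrightarrow> D k \<le> D m" for m k using hi_anti lo_mono by (simp add: D_def diff_mono)
  define n where "n = real (card (UNIV::'a set))"
  have npos: "n > 0" by (simp add: n_def)
  have pmax: "pmax \<ge> pmin" using Pbd by (meson order_trans)
  then have pmaxpos: "pmax > 0" using pmin by simp
  have Pnn: "P l c \<ge> 0" for l c using Pbd[of l c] pmin by linarith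
  define g where "g = min (pmin^2 / (n * pmax^2)) (1/4)"
  have gpos: "g > 0" using pmin pmaxpos npos by (simp add: g_def)
  have g4: "g \<le> 1/4" unfolding g_def by (rule min.cobounded2)
  have contract: "D (k + p) \<le> (1 - 2*g) * D k" if kp: "k \<ge> p" for k
  proof -
    define j where "j = k - p"
    have kj: "k = j + p" using kp by (simp add: j_def)
    define U where "U = (\<Sum>d\<in>UNIV. u j d)"
    have Upos: "U > 0" unfolding U_def by (rule sum_pos) (auto intro: upos)
    have ubd: "pmin * U \<le> u k l \<and> u k l \<le> pmax * U" for l
    proof -
      have e: "u k l = (\<Sum>d\<in>UNIV. u j d * P d l)" using upstep[of j l] kj by simp
      have "pmin * U = (\<Sum>d\<in>UNIV. u j d * pmin)" by (simp add: U_def sum_distrib_left mult.commute)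
      also have "\<dots> \<le> u k l" unfolding e
        by (intro sum_mono mult_left_mono) (simp_all add: Pbd upos less_imp_le)
      finally have 1: "pmin * U \<le> u k l" .
      have "u k l \<le> (\<Sum>d\<in>UNIV. u j d * pmax)" unfolding e
        by (intro sum_mono mult_left_mono) (simp_all add: Pbd upos less_imp_le)
      also have "\<dots> = pmax * U" by (simp add: U_def sum_distrib_left mult.commute)
      finally show ?thesis using 1 by simp
    qed
    have step: "lo k + g * D k \<le> r (k + p) c \<and> r (k + p) c \<le> hi k - g * D k" for c
    proof -
      define a where "a l = u k l * P l c" for l
      have S: "(\<Sum>l\<in>UNIV. a l) = u (k + p) c" by (simp add: a_def upstep)
      have Spos: "(\<Sum>l\<in>UNIV. a l) > 0" using S upos by simp
      have num: "u (Suc (k + p)) c = (\<Sum>l\<in>UNIV. r k l * a l)"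
      proof -
        have "u (Suc (k + p)) c = u (Suc k + p) c" by simp
        also have "\<dots> = (\<Sum>l\<in>UNIV. u (Suc k) l * P l c)" by (rule upstep)
        also have "\<dots> = (\<Sum>l\<in>UNIV. r k l * a l)" by (simp only: unext a_def mult.assoc)
        finally show ?thesis .
      qed
      have ann: "\<forall>l. a l \<ge> 0" using upos Pbd pmin by (simp add: a_def) (meson less_imp_le mult_nonneg_nonneg order_trans)
      have Sle: "(\<Sum>l\<in>UNIV. a l) \<le> n * (pmax * U * pmax)"
      proof -
        have "(\<Sum>l\<in>UNIV. a l) \<le> (\<Sum>l\<in>(UNIV::'a set). pmax * U * pmax)"
          unfolding a_def
          by (rule sum_mono, rule mult_mono) (use ubd Pbd Pnn pmaxpos Upos upos in \<open>auto intro: less_imp_le\<close>)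
        then show ?thesis by (simp add: n_def)
      qed
      have ga: "\<forall>l. a l \<ge> g * (\<Sum>l\<in>UNIV. a l)"
      proof
        fix l
        have al: "a l \<ge> pmin * U * pmin" unfolding a_def
          by (rule mult_mono) (use ubd Pbd Pnn pmin Upos upos in \<open>auto intro: less_imp_le\<close>)
        have "g * (\<Sum>l\<in>UNIV. a l) \<le> (pmin^2 / (n * pmax^2)) * (n * (pmax * U * pmax))"
          by (rule mult_mono) (use Sle Spos npos pmaxpos in \<open>auto simp: g_def\<close>)
        also have "\<dots> = pmin * U * pmin" using npos pmaxpos by (simp add: field_simps power2_eq_square)
        finally show "a l \<ge> g * (\<Sum>l\<in>UNIV. a l)" using al by linarith
      qed
      have b1: "(\<Sum>l\<in>UNIV. r k l * a l) \<le> hi k * (\<Sum>l\<in>UNIV. a l) - g * (hi k - lo k) * (\<Sum>l\<in>UNIV. a l)"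
        using avg_bounds(1)[of a g "lo k" "r k" "hi k" "clo k" "chi k"] ann ga hi_ge lo_le clo chi by simp
      have b2: "(\<Sum>l\<in>UNIV. r k l * a l) \<ge> lo k * (\<Sum>l\<in>UNIV. a l) + g * (hi k - lo k) * (\<Sum>l\<in>UNIV. a l)"
        using avg_bounds(2)[of a g "lo k" "r k" "hi k" "clo k" "chi k"] ann ga hi_ge lo_le clo chi by simp
      have "r (k + p) c = (\<Sum>l\<in>UNIV. r k l * a l) / (\<Sum>l\<in>UNIV. a l)"
        unfolding r_def num S ..
      moreover have b1': "(\<Sum>l\<in>UNIV. r k l * a l) \<le> (hi k - g * (hi k - lo k)) * (\<Sum>l\<in>UNIV. a l)"
        using b1 by (simp add: algebra_simps)
      moreover have b2': "(lo k + g * (hi k - lo k)) * (\<Sum>l\<in>UNIV. a l) \<le> (\<Sum>l\<in>UNIV. r k l * a l)"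
        using b2 by (simp add: algebra_simps)
      ultimately have "lo k + g * (hi k - lo k) \<le> r (k + p) c \<and> r (k + p) c \<le> hi k - g * (hi k - lo k)"
        using div_bounds[OF Spos] by blast
      then show ?thesis by (simp add: D_def)
    qed
    have "hi (k + p) \<le> hi k - g * D k" using step chi by metis
    moreover have "lo (k + p) \<ge> lo k + g * D k" using step clo by metis
    ultimately show ?thesis by (simp add: D_def algebra_simps)
  qed
  define th where "th = 1 - 2 * g"
  have th0: "th \<ge> 0" and th1: "th < 1" using gpos g4 by (auto simp: th_def)
  have geo: "D (p + j * p) \<le> th ^ j * D p" for j
  proof (induction j)
    case 0 then show ?case by simp
  next
    case (Suc j)
    have "D (p + Suc j * p) = D ((p + j * p) + p)" by (simp add: algebra_simps)
    also have "\<dots> \<le> th * D (p + j * p)" using contract[of "p + j * p"] by (simp add: th_def)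
    also have "\<dots> \<le> th * (th ^ j * D p)" using Suc th0 by (simp add: mult_left_mono)
    finally show ?case by simp
  qed
  have Dlim: "\<exists>k0. \<forall>k\<ge>k0. D k < \<epsilon>" if eps: "\<epsilon> > 0" for \<epsilon>
  proof (cases "D p = 0")
    case True
    then show ?thesis using D_anti D_nn eps by (metis order.strict_trans1)
  next
    case False
    then have Dp: "D p > 0" using D_nn[of p] by simp
    obtain j where "th ^ j < \<epsilon> / D p" using real_arch_pow_inv[of "\<epsilon> / D p" th] th1 eps Dp by auto
    then have "th ^ j * D p < \<epsilon>" using Dp by (simp add: field_simps)
    then show ?thesis using geo[of j] D_anti[of "p + j * p"] by (meson le_less_trans order_trans)
  qed
  define \<rho> where "\<rho> = (INF k. hi k)"
  have bdd: "bdd_below (range hi)"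
  proof (rule bdd_belowI2)
    fix k show "lo 0 \<le> hi k" using lo_mono[of 0 k] lo_le[of k] hi_ge[of k] by (meson le0 order_trans)
  qed
  have rho_hi: "\<rho> \<le> hi k" for k unfolding \<rho>_def by (rule cINF_lower[OF bdd]) simp
  have lo_rho: "lo k \<le> \<rho>" for k unfolding \<rho>_def
  proof (rule cINF_greatest)
    fix j assume "j \<in> (UNIV::nat set)"
    show "lo k \<le> hi j"
    proof (cases "k \<le> j")
      case True then show ?thesis using lo_mono[of k j] lo_le[of j] hi_ge[of j] by (meson order_trans)
    next
      case False then show ?thesis using hi_anti[of j k] lo_le[of k] hi_ge[of k] by (meson order_trans nat_le_linear)
    qed
  qed simp
  show ?thesis
  proof (rule exI[of _ \<rho>], intro allI impI)
    fix \<epsilon> :: real assume "\<epsilon> > 0"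
    then obtain k0 where k0: "\<forall>k\<ge>k0. D k < \<epsilon>" using Dlim by blast
    show "\<exists>k0. \<forall>k\<ge>k0. \<forall>c. \<bar>u (Suc k) c / u k c - \<rho>\<bar> < \<epsilon>"
    proof (rule exI[of _ k0], intro allI impI)
      fix k c assume "k0 \<le> k"
      then have "D k < \<epsilon>" using k0 by blast
      moreover have "lo k \<le> r k c" "r k c \<le> hi k" "lo k \<le> \<rho>" "\<rho> \<le> hi k"
        using lo_le hi_ge lo_rho rho_hi by auto
      ultimately show "\<bar>u (Suc k) c / u k c - \<rho>\<bar> < \<epsilon>" unfolding r_def[symmetric] D_def by linarith
    qed
  qed
qed

definition colsum :: "('a::finite \<Rightarrow> 'a \<Rightarrow> nat) \<Rightarrow> nat \<Rightarrow> 'a \<Rightarrow> real" where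
  "colsum M k c = (\<Sum>b\<in>UNIV. real (mat_pow M k b c))"

definition rowsum :: "('a::finite \<Rightarrow> 'a \<Rightarrow> nat) \<Rightarrow> nat \<Rightarrow> 'a \<Rightarrow> real" where
  "rowsum M k i = (\<Sum>j\<in>UNIV. real (mat_pow M k i j))"

lemma mat_pow_1: "mat_pow M 1 i j = M i j"
proof -
  have "mat_pow M 1 i j = (\<Sum>l\<in>UNIV. (if i = l then 1 else 0) * M l j)" by simp
  also have "\<dots> = (\<Sum>l\<in>UNIV. if i = l then M l j else 0)" by (rule sum.cong) auto
  finally show ?thesis by simp
qed

lemma colsum_gen: "colsum M (a + b) c = (\<Sum>l\<in>UNIV. colsum M a l * real (mat_pow M b l c))"
proof -
  have "colsum M (a + b) c = (\<Sum>i\<in>UNIV. \<Sum>l\<in>UNIV. real (mat_pow M a i l) * real (mat_pow M b l c))"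
    unfolding colsum_def mat_assoc by simp
  also have "\<dots> = (\<Sum>l\<in>UNIV. \<Sum>i\<in>UNIV. real (mat_pow M a i l) * real (mat_pow M b l c))"
    by (rule sum.swap)
  also have "\<dots> = (\<Sum>l\<in>UNIV. colsum M a l * real (mat_pow M b l c))"
    by (simp add: colsum_def sum_distrib_right)
  finally show ?thesis .
qed

lemma rowsum_gen: "rowsum M (a + b) i = (\<Sum>l\<in>UNIV. rowsum M b l * real (mat_pow M a i l))"
proof -
  have "rowsum M (a + b) i = (\<Sum>j\<in>UNIV. \<Sum>l\<in>UNIV. real (mat_pow M a i l) * real (mat_pow M b l j))"
    unfolding rowsum_def mat_assoc by simp
  also have "\<dots> = (\<Sum>l\<in>UNIV. \<Sum>j\<in>UNIV. real (mat_pow M a i l) * real (mat_pow M b l j))"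
    by (rule sum.swap)
  also have "\<dots> = (\<Sum>l\<in>UNIV. rowsum M b l * real (mat_pow M a i l))"
    by (simp add: rowsum_def sum_distrib_left mult.commute)
  finally show ?thesis .
qed

lemma colsum_Suc: "colsum M (Suc k) c = (\<Sum>l\<in>UNIV. colsum M k l * real (M l c))"
  using colsum_gen[of M k 1 c, unfolded mat_pow_1] by simp

lemma rowsum_Suc: "rowsum M (Suc k) i = (\<Sum>l\<in>UNIV. rowsum M k l * real (M i l))"
  using rowsum_gen[of M 1 k i, unfolded mat_pow_1] by simp

lemma total_eq: "(\<Sum>c\<in>UNIV. colsum M k c) = (\<Sum>i\<in>UNIV. rowsum M k i)"
  unfolding colsum_def rowsum_def by (rule sum.swap)

lemma prim_col:
  assumes "primitive_matrix M"
  shows "\<exists>l. M l c > 0"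
proof (rule ccontr)
  assume "\<not> ?thesis"
  then have z: "\<And>l. M l c = 0" by simp
  obtain p where p: "p > 0" "\<forall>i j. mat_pow M p i j > 0" using assms by (auto simp: primitive_matrix_def)
  obtain q where "p = Suc q" using p by (cases p) auto
  then have "mat_pow M p c c = 0" by (simp add: z)
  then show False using p(2)[rule_format, of c c] by simp
qed

lemma prim_row:
  assumes "primitive_matrix M"
  shows "\<exists>l. M i l > 0"
proof (rule ccontr)
  assume "\<not> ?thesis"
  then have z: "\<And>l. M i l = 0" by simp
  obtain p where p: "p > 0" "\<forall>i j. mat_pow M p i j > 0" using assms by (auto simp: primitive_matrix_def)
  have "mat_pow M (1 + (p - 1)) i i = (\<Sum>l\<in>UNIV. M i l * mat_pow M (p - 1) l i)"
    using mat_assoc[of M 1 "p - 1" i i] unfolding mat_pow_1 .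
  also have "\<dots> = 0" by (simp add: z)
  finally show False using p(2)[rule_format, of i i] p(1) by simp
qed

lemma colsum_pos:
  assumes "primitive_matrix M"
  shows "colsum M k c > 0"
proof (induction k arbitrary: c)
  case 0
  have "colsum M 0 c = (\<Sum>b\<in>UNIV. if b = c then 1 else 0)" unfolding colsum_def by (rule sum.cong) auto
  then show ?case by simp
next
  case (Suc k)
  obtain l where l: "M l c > 0" using prim_col[OF assms] by blast
  have "0 < colsum M k l * real (M l c)" using Suc l by simp
  also have "\<dots> \<le> (\<Sum>l\<in>UNIV. colsum M k l * real (M l c))"
    by (rule member_le_sum) (use Suc in \<open>auto intro!: mult_nonneg_nonneg simp: order_less_imp_le\<close>)
  finally show ?case by (simp add: colsum_Suc)
qed

lemma rowsum_pos:
  assumes "primitive_matrix M"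
  shows "rowsum M k i > 0"
proof (induction k arbitrary: i)
  case 0
  have "rowsum M 0 i = (\<Sum>b\<in>UNIV. if i = b then 1 else 0)" unfolding rowsum_def by (rule sum.cong) auto
  then show ?case by simp
next
  case (Suc k)
  obtain l where l: "M i l > 0" using prim_row[OF assms] by blast
  have "0 < rowsum M k l * real (M i l)" using Suc l by simp
  also have "\<dots> \<le> (\<Sum>l\<in>UNIV. rowsum M k l * real (M i l))"
    by (rule member_le_sum) (use Suc in \<open>auto intro!: mult_nonneg_nonneg simp: order_less_imp_le\<close>)
  finally show ?case by (simp add: rowsum_Suc)
qed

lemma col_conv:
  assumes prim: "primitive_matrix M"
  shows "\<exists>\<rho>. \<forall>\<epsilon>>0. \<exists>k0. \<forall>k\<ge>k0. \<forall>c. \<bar>colsum M (Suc k) c / colsum M k c - \<rho>\<bar> < \<epsilon>"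
proof -
  obtain p where p: "p > 0" "\<forall>i j. mat_pow M p i j > 0" using prim by (auto simp: primitive_matrix_def)
  define pmax where "pmax = (\<Sum>l\<in>UNIV. \<Sum>c\<in>UNIV. real (mat_pow M p l c))"
  have Pbd: "1 \<le> real (mat_pow M p l c) \<and> real (mat_pow M p l c) \<le> pmax" for l c
  proof
    show "1 \<le> real (mat_pow M p l c)" using p by (simp add: Suc_le_eq)
    have "real (mat_pow M p l c) \<le> (\<Sum>c\<in>UNIV. real (mat_pow M p l c))" by (rule member_le_sum) auto
    also have "\<dots> \<le> pmax" unfolding pmax_def by (rule member_le_sum[of l]) (auto intro: sum_nonneg)
    finally show "real (mat_pow M p l c) \<le> pmax" .
  qed
  show ?thesis
    by (rule ratio_conv[of "colsum M" "\<lambda>l c. real (M l c)" 1 "\<lambda>l c. real (mat_pow M p l c)" pmax p])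
       (use colsum_pos[OF prim] colsum_Suc colsum_gen Pbd in auto)
qed

lemma row_conv:
  assumes prim: "primitive_matrix M"
  shows "\<exists>\<rho>. \<forall>\<epsilon>>0. \<exists>k0. \<forall>k\<ge>k0. \<forall>c. \<bar>rowsum M (Suc k) c / rowsum M k c - \<rho>\<bar> < \<epsilon>"
proof -
  obtain p where p: "p > 0" "\<forall>i j. mat_pow M p i j > 0" using prim by (auto simp: primitive_matrix_def)
  define pmax where "pmax = (\<Sum>l\<in>UNIV. \<Sum>c\<in>UNIV. real (mat_pow M p l c))"
  have Pbd: "1 \<le> real (mat_pow M p l c) \<and> real (mat_pow M p l c) \<le> pmax" for l c
  proof
    show "1 \<le> real (mat_pow M p l c)" using p by (simp add: Suc_le_eq)
    have "real (mat_pow M p l c) \<le> (\<Sum>c\<in>UNIV. real (mat_pow M p l c))" by (rule member_le_sum) auto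
    also have "\<dots> \<le> pmax" unfolding pmax_def by (rule member_le_sum[of l]) (auto intro: sum_nonneg)
    finally show "real (mat_pow M p l c) \<le> pmax" .
  qed
  have up: "rowsum M (k + p) c = (\<Sum>l\<in>UNIV. rowsum M k l * real (mat_pow M p c l))" for k c
    using rowsum_gen[of M p k c] by (simp add: add.commute)
  show ?thesis
    by (rule ratio_conv[of "rowsum M" "\<lambda>l c. real (M c l)" 1 "\<lambda>l c. real (mat_pow M p c l)" pmax p])
       (use rowsum_pos[OF prim] rowsum_Suc up Pbd in auto)
qed

lemma sum_ratio_bound:
  fixes x y :: "'a::finite \<Rightarrow> real"
  assumes y: "\<And>c. y c > 0" and b: "\<And>c. \<bar>x c / y c - \<rho>\<bar> < \<epsilon>"
  shows "\<bar>(\<Sum>c\<in>UNIV. x c) - \<rho> * (\<Sum>c\<in>UNIV. y c)\<bar> \<le> \<epsilon> * (\<Sum>c\<in>UNIV. y c)"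
proof -
  have e: "\<bar>x c - \<rho> * y c\<bar> \<le> \<epsilon> * y c" for c
  proof -
    have "\<bar>x c - \<rho> * y c\<bar> = \<bar>x c / y c - \<rho>\<bar> * y c"
      using y[of c] by (simp add: field_simps abs_mult abs_of_pos)
    also have "\<dots> \<le> \<epsilon> * y c" using b[of c] y[of c] by (intro mult_right_mono) auto
    finally show ?thesis .
  qed
  have "\<bar>(\<Sum>c\<in>UNIV. x c) - \<rho> * (\<Sum>c\<in>UNIV. y c)\<bar> = \<bar>\<Sum>c\<in>UNIV. x c - \<rho> * y c\<bar>"
    by (simp add: sum_subtractf sum_distrib_left)
  also have "\<dots> \<le> (\<Sum>c\<in>UNIV. \<bar>x c - \<rho> * y c\<bar>)" by (rule sum_abs)
  also have "\<dots> \<le> (\<Sum>c\<in>UNIV. \<epsilon> * y c)" by (rule sum_mono) (rule e)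
  finally show ?thesis by (simp add: sum_distrib_left)
qed

lemma eig_pow:
  fixes M :: "'a::finite \<Rightarrow> 'a \<Rightarrow> nat" and v :: "'a \<Rightarrow> complex"
  assumes ev: "\<And>i. (\<Sum>j\<in>UNIV. of_nat (M i j) * v j) = \<mu> * v i"
  shows "(\<Sum>j\<in>UNIV. of_nat (mat_pow M k i j) * v j) = \<mu> ^ k * v i"
proof (induction k arbitrary: i)
  case 0
  have "(\<Sum>j\<in>UNIV. of_nat (mat_pow M 0 i j) * v j) = (\<Sum>j\<in>UNIV. if i = j then v j else 0)"
    by (rule sum.cong) auto
  then show ?case by simp
next
  case (Suc k)
  have "(\<Sum>j\<in>UNIV. of_nat (mat_pow M (Suc k) i j) * v j)
      = (\<Sum>j\<in>UNIV. \<Sum>l\<in>UNIV. of_nat (mat_pow M k i l) * (of_nat (M l j) * v j))"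
    by (simp add: sum_distrib_right mult.assoc)
  also have "\<dots> = (\<Sum>l\<in>UNIV. \<Sum>j\<in>UNIV. of_nat (mat_pow M k i l) * (of_nat (M l j) * v j))"
    by (rule sum.swap)
  also have "\<dots> = (\<Sum>l\<in>UNIV. of_nat (mat_pow M k i l) * (\<mu> * v l))"
    by (simp add: sum_distrib_left[symmetric] ev)
  also have "\<dots> = \<mu> * (\<Sum>l\<in>UNIV. of_nat (mat_pow M k i l) * v l)"
    by (simp add: sum_distrib_left mult.left_commute)
  also have "\<dots> = \<mu> ^ Suc k * v i" using Suc by simp
  finally show ?case .
qed

lemma pf_eq:
  fixes M :: "'a::finite \<Rightarrow> 'a \<Rightarrow> nat"
  assumes prim: "primitive_matrix M"
    and rho: "\<forall>\<epsilon>>0. \<exists>k0. \<forall>k\<ge>k0. \<forall>c. \<bar>rowsum M (Suc k) c / rowsum M k c - \<rho>\<bar> < \<epsilon>"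
  shows "pf_eigenvalue M = \<rho>"
proof -
  define x where "x k i = rowsum M (Suc k) i / rowsum M k i" for k i
  have rpos: "rowsum M k i > 0" for k i by (rule rowsum_pos[OF prim])
  have xpos: "x k i > 0" for k i using rpos by (simp add: x_def)
  have rho0: "\<rho> \<ge> 0"
  proof (rule ccontr)
    assume "\<not> \<rho> \<ge> 0"
    then have "- \<rho> > 0" by simp
    then obtain k0 where "\<forall>k\<ge>k0. \<forall>c. \<bar>x k c - \<rho>\<bar> < - \<rho>" using rho[rule_format, of "- \<rho>"] by (auto simp: x_def)
    then have "\<bar>x k0 undefined - \<rho>\<bar> < - \<rho>" by blast
    then show False using xpos[of k0 undefined] by (simp add: abs_less_iff)
  qed
  define T where "T k = (\<Sum>i\<in>UNIV. rowsum M k i)" for k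
  have Tpos: "T k > 0" for k unfolding T_def by (rule sum_pos) (auto intro: rpos)
  define v where "v k i = rowsum M k i / T k" for k i
  have v01: "0 \<le> v k i \<and> v k i \<le> 1" for k i
  proof -
    have "rowsum M k i \<le> T k" unfolding T_def by (rule member_le_sum) (auto intro: less_imp_le rpos)
    then show ?thesis using rpos[of k i] Tpos[of k] by (simp add: v_def)
  qed
  have vsum: "(\<Sum>i\<in>UNIV. v k i) = 1" for k
    using Tpos[of k] by (simp add: v_def T_def sum_divide_distrib[symmetric])
  have "\<forall>d\<subseteq>(UNIV::'a set). \<exists>l r. strict_mono r \<and> (\<forall>e>0. eventually (\<lambda>n. \<forall>i\<in>d. dist (v (r n) i) (l i) < e) sequentially)"
  proof (rule compact_lemma_general[where f = v and basis = UNIV and proj = "\<lambda>x i. x i" and unproj = "\<lambda>e. e"])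
    fix i :: 'a
    show "bounded ((\<lambda>x. x i) ` range v)"
      unfolding bounded_real using v01 by (auto intro!: exI[of _ 1])
  qed auto
  then obtain l r where r: "strict_mono r" and lr: "\<forall>e>0. eventually (\<lambda>n. \<forall>i\<in>UNIV. dist (v (r n) i) (l i) < e) sequentially"
    by blast
  have vconv: "(\<lambda>n. v (r n) i) \<longlonglongrightarrow> l i" for i
  proof (rule tendstoI)
    fix e :: real assume "e > 0"
    from lr \<open>e > 0\<close> have "eventually (\<lambda>n. \<forall>i\<in>UNIV. dist (v (r n) i) (l i) < e) sequentially" by blast
    then show "eventually (\<lambda>n. dist (v (r n) i) (l i) < e) sequentially"
      by (rule eventually_mono) blast
  qed
  have xconv: "(\<lambda>n. x (r n) i) \<longlonglongrightarrow> \<rho>" for i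
  proof (rule LIMSEQ_I)
    fix e :: real assume "e > 0"
    then obtain k0 where k0: "\<forall>k\<ge>k0. \<forall>c. \<bar>x k c - \<rho>\<bar> < e" using rho[rule_format, of e] by (auto simp: x_def)
    have "\<forall>n\<ge>k0. norm (x (r n) i - \<rho>) < e"
      using k0 seq_suble[OF r] by (metis order_trans real_norm_def)
    then show "\<exists>no. \<forall>n\<ge>no. norm (x (r n) i - \<rho>) < e" by blast
  qed
  have ident: "(\<Sum>j\<in>UNIV. real (M i j) * v k j) = x k i * v k i" for k i
  proof -
    have "(\<Sum>j\<in>UNIV. real (M i j) * v k j) = (\<Sum>j\<in>UNIV. rowsum M k j * real (M i j)) / T k"
      by (simp add: v_def sum_divide_distrib mult.commute)
    also have "\<dots> = rowsum M (Suc k) i / T k" by (simp add: rowsum_Suc)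
    also have "\<dots> = x k i * v k i" using rpos[of k i] by (simp add: x_def v_def)
    finally show ?thesis .
  qed
  have leig: "(\<Sum>j\<in>UNIV. real (M i j) * l j) = \<rho> * l i" for i
  proof -
    have 1: "(\<lambda>n. \<Sum>j\<in>UNIV. real (M i j) * v (r n) j) \<longlonglongrightarrow> (\<Sum>j\<in>UNIV. real (M i j) * l j)"
      by (intro tendsto_intros vconv)
    have 2: "(\<lambda>n. x (r n) i * v (r n) i) \<longlonglongrightarrow> \<rho> * l i"
      by (intro tendsto_intros vconv xconv)
    show ?thesis using LIMSEQ_unique[OF 1] 2 by (simp add: ident)
  qed
  have lsum: "(\<Sum>i\<in>UNIV. l i) = 1"
  proof -
    have "(\<lambda>n. \<Sum>i\<in>UNIV. v (r n) i) \<longlonglongrightarrow> (\<Sum>i\<in>UNIV. l i)" by (intro tendsto_intros vconv)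
    then show ?thesis using vsum by (simp add: LIMSEQ_const_iff)
  qed
  have eig: "is_eigenvalue M (complex_of_real \<rho>)"
    unfolding is_eigenvalue_def
  proof (intro exI[of _ "\<lambda>j. complex_of_real (l j)"] conjI allI)
    show "(\<lambda>j. complex_of_real (l j)) \<noteq> (\<lambda>_. 0)"
    proof
      assume "(\<lambda>j. complex_of_real (l j)) = (\<lambda>_. 0)"
      then have "\<And>j. l j = 0" by (metis of_real_eq_0_iff)
      then show False using lsum by simp
    qed
    fix i
    have "complex_of_real (\<Sum>j\<in>UNIV. real (M i j) * l j) = complex_of_real (\<rho> * l i)" using leig by simp
    then show "(\<Sum>j\<in>UNIV. of_nat (M i j) * complex_of_real (l j)) = complex_of_real \<rho> * complex_of_real (l i)"
      by simp
  qed
  have bound: "cmod \<mu> \<le> \<rho>" if "is_eigenvalue M \<mu>" for \<mu>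
  proof -
    from that obtain w :: "'a \<Rightarrow> complex" where w0: "w \<noteq> (\<lambda>_. 0)"
      and ev: "\<And>i. (\<Sum>j\<in>UNIV. of_nat (M i j) * w j) = \<mu> * w i"
      by (auto simp: is_eigenvalue_def)
    obtain i0 where i0: "w i0 \<noteq> 0" using w0 by auto
    define V where "V = (\<Sum>j\<in>UNIV. cmod (w j))"
    have V0: "V \<ge> 0" unfolding V_def by (rule sum_nonneg) auto
    have pb: "cmod \<mu> ^ k * cmod (w i0) \<le> V * rowsum M k i0" for k
    proof -
      have "cmod \<mu> ^ k * cmod (w i0) = cmod (\<Sum>j\<in>UNIV. of_nat (mat_pow M k i0 j) * w j)"
        by (simp add: eig_pow[OF ev] norm_mult norm_power)
      also have "\<dots> \<le> (\<Sum>j\<in>UNIV. cmod (of_nat (mat_pow M k i0 j) * w j))" by (rule norm_sum)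
      also have "\<dots> \<le> (\<Sum>j\<in>UNIV. real (mat_pow M k i0 j) * V)"
      proof (rule sum_mono)
        fix j
        have "cmod (w j) \<le> V" unfolding V_def by (rule member_le_sum) auto
        then show "cmod (of_nat (mat_pow M k i0 j) * w j) \<le> real (mat_pow M k i0 j) * V"
          by (simp add: norm_mult mult_left_mono)
      qed
      also have "\<dots> = V * rowsum M k i0" by (simp add: rowsum_def sum_distrib_left mult.commute)
      finally show ?thesis .
    qed
    have "cmod \<mu> \<le> \<rho> + \<delta>" if dpos: "\<delta> > 0" for \<delta>
    proof (rule ccontr)
      assume "\<not> cmod \<mu> \<le> \<rho> + \<delta>"
      then have big: "cmod \<mu> > \<rho> + \<delta>" by simp
      define b where "b = \<rho> + \<delta>"
      have bpos: "b > 0" using rho0 dpos by (simp add: b_def)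
      obtain k0 where k0: "\<forall>k\<ge>k0. \<forall>c. \<bar>x k c - \<rho>\<bar> < \<delta>" using rho[rule_format, OF dpos] by (auto simp: x_def)
      have grow: "rowsum M (k0 + m) i0 \<le> rowsum M k0 i0 * b ^ m" for m
      proof (induction m)
        case 0 then show ?case by simp
      next
        case (Suc m)
        have "x (k0 + m) i0 < b" using k0[rule_format, of "k0 + m" i0] by (simp add: b_def abs_less_iff)
        then have "rowsum M (Suc (k0 + m)) i0 \<le> b * rowsum M (k0 + m) i0"
          using rpos[of "k0 + m" i0] by (simp add: x_def divide_less_eq less_imp_le)
        also have "\<dots> \<le> b * (rowsum M k0 i0 * b ^ m)" using Suc bpos by (simp add: mult_left_mono)
        finally show ?case by (simp add: mult.commute mult.left_commute)
      qed
      define a where "a = cmod \<mu>"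
      have ab: "a > b" using big by (simp add: a_def b_def)
      have apos: "a > 0" using ab bpos by simp
      define c where "c = cmod (w i0)"
      have cpos: "c > 0" using i0 by (simp add: c_def)
      define R0 where "R0 = rowsum M k0 i0"
      have q1: "a / b > 1" using ab bpos by simp
      obtain m where m: "V * R0 / (a ^ k0 * c) < (a / b) ^ m" using real_arch_pow[OF q1] by blast
      have "V * R0 < (a / b) ^ m * (a ^ k0 * c)" using m apos cpos by (simp add: divide_less_eq)
      then have "V * R0 * b ^ m < (a / b) ^ m * (a ^ k0 * c) * b ^ m" using bpos
        by (intro mult_strict_right_mono) auto
      moreover have pw: "(a / b) ^ m * b ^ m = a ^ m" using bpos by (simp add: power_divide)
      moreover have "(a / b) ^ m * (a ^ k0 * c) * b ^ m = ((a / b) ^ m * b ^ m) * (a ^ k0 * c)"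
        by (simp only: ac_simps)
      ultimately have "V * R0 * b ^ m < a ^ m * (a ^ k0 * c)" by simp
      moreover have "a ^ (k0 + m) * c \<le> V * R0 * b ^ m"
      proof -
        have "a ^ (k0 + m) * c \<le> V * rowsum M (k0 + m) i0" using pb[of "k0 + m"] by (simp add: a_def c_def)
        also have "\<dots> \<le> V * (R0 * b ^ m)" using grow[of m] V0 by (simp add: R0_def mult_left_mono)
        finally show ?thesis by simp
      qed
      moreover have "a ^ (k0 + m) * c = a ^ m * (a ^ k0 * c)" by (simp add: power_add ac_simps)
      ultimately show False by linarith
    qed
    then show ?thesis by (rule field_le_epsilon)
  qed
  have "Sup {cmod \<mu> | \<mu>. is_eigenvalue M \<mu>} = \<rho>"
  proof (rule cSup_eq_maximum)
    have "cmod (complex_of_real \<rho>) = \<rho>" using rho0 by simp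
    then show "\<rho> \<in> {cmod \<mu> | \<mu>. is_eigenvalue M \<mu>}" using eig by (metis (mono_tags, lifting) mem_Collect_eq)
  next
    fix y assume "y \<in> {cmod \<mu> | \<mu>. is_eigenvalue M \<mu>}"
    then show "y \<le> \<rho>" using bound by blast
  qed
  then show ?thesis by (simp add: pf_eigenvalue_def)
qed

lemma rho_unique:
  fixes M :: "'a::finite \<Rightarrow> 'a \<Rightarrow> nat"
  assumes prim: "primitive_matrix M"
    and rc: "\<forall>\<epsilon>>0. \<exists>k0. \<forall>k\<ge>k0. \<forall>c. \<bar>colsum M (Suc k) c / colsum M k c - \<rho>\<bar> < \<epsilon>"
    and rr: "\<forall>\<epsilon>>0. \<exists>k0. \<forall>k\<ge>k0. \<forall>c. \<bar>rowsum M (Suc k) c / rowsum M k c - \<rho>'\<bar> < \<epsilon>"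
  shows "\<rho> = \<rho>'"
proof (rule ccontr)
  assume ne: "\<rho> \<noteq> \<rho>'"
  define e where "e = \<bar>\<rho> - \<rho>'\<bar> / 4"
  have epos: "e > 0" using ne by (simp add: e_def)
  obtain k0 where k0: "\<forall>k\<ge>k0. \<forall>c. \<bar>colsum M (Suc k) c / colsum M k c - \<rho>\<bar> < e" using rc epos by blast
  obtain k1 where k1: "\<forall>k\<ge>k1. \<forall>c. \<bar>rowsum M (Suc k) c / rowsum M k c - \<rho>'\<bar> < e" using rr epos by blast
  define k where "k = max k0 k1"
  define T where "T j = (\<Sum>c\<in>UNIV. colsum M j c)" for j
  have T2: "T j = (\<Sum>i\<in>UNIV. rowsum M j i)" for j unfolding T_def by (rule total_eq)
  have Tpos: "T k > 0" unfolding T_def by (rule sum_pos) (auto intro: colsum_pos[OF prim])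
  have 1: "\<bar>T (Suc k) - \<rho> * T k\<bar> \<le> e * T k"
    unfolding T_def by (rule sum_ratio_bound) (use colsum_pos[OF prim] k0 in \<open>auto simp: k_def\<close>)
  have 2: "\<bar>T (Suc k) - \<rho>' * T k\<bar> \<le> e * T k"
    unfolding T2 by (rule sum_ratio_bound) (use rowsum_pos[OF prim] k1 in \<open>auto simp: k_def\<close>)
  have "\<bar>\<rho> - \<rho>'\<bar> * T k = \<bar>\<rho> * T k - \<rho>' * T k\<bar>" using Tpos by (simp add: abs_mult left_diff_distrib[symmetric])
  also have "\<dots> \<le> 2 * e * T k" using 1 2 by linarith
  finally have "\<bar>\<rho> - \<rho>'\<bar> \<le> 2 * e" using Tpos by simp
  then show False using epos by (simp add: e_def)
qed

lemma W_single_count: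
  assumes rs: "random_substitution \<theta>" and sc: "semi_compatible \<theta>"
    and w: "w \<in> W \<theta> k [c]"
  shows "count_list w d = mat_pow (subst_matrix \<theta>) k d (c::'a::finite)"
proof -
  have "count_list w d = (\<Sum>e\<in>UNIV. count_list [c] e * mat_pow (subst_matrix \<theta>) k d e)"
    by (rule W_count[OF rs sc w])
  also have "\<dots> = (\<Sum>e\<in>UNIV. if e = c then mat_pow (subst_matrix \<theta>) k d e else 0)"
    by (rule sum.cong) auto
  finally show ?thesis by simp
qed

lemma W_single_len:
  assumes rs: "random_substitution \<theta>" and sc: "semi_compatible \<theta>"
    and w: "w \<in> W \<theta> k [c]"
  shows "real (length w) = colsum (subst_matrix \<theta>) k (c::'a::finite)"
  using W_single_count[OF rs sc w] by (simp add: length_count colsum_def)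

lemma W_single_F:
  assumes rs: "random_substitution \<theta>" and sc: "semi_compatible \<theta>"
    and w: "w \<in> W \<theta> k [c]"
  shows "real (F \<theta> w) = colsum (subst_matrix \<theta>) (Suc k) (c::'a::finite)"
proof -
  obtain y where y: "y \<in> subst_word \<theta> w" using subst_word_nonempty[OF rs] by blast
  have "y \<in> W \<theta> (Suc k) [c]" using y w by (auto simp: W_Suc subst_set_def)
  then have "real (length y) = colsum (subst_matrix \<theta>) (Suc k) c" by (rule W_single_len[OF rs sc])
  moreover have "length y = F \<theta> w" by (rule subst_length[OF rs sc y])
  ultimately show ?thesis by simp
qed

lemma concat_bound:
  assumes "\<And>b. b \<in> set ws \<Longrightarrow> \<bar>real (F \<theta> b) - lam * real (length b)\<bar> \<le> d * real (length b)"
  shows "\<bar>real (F \<theta> (concat ws)) - lam * real (length (concat ws))\<bar> \<le> d * real (length (concat ws))"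
  using assms
proof (induction ws)
  case Nil then show ?case by (simp add: F_def)
next
  case (Cons b bs)
  have 1: "\<bar>real (F \<theta> b) - lam * real (length b)\<bar> \<le> d * real (length b)" using Cons.prems by simp
  have 2: "\<bar>real (F \<theta> (concat bs)) - lam * real (length (concat bs))\<bar> \<le> d * real (length (concat bs))"
    using Cons by simp
  show ?case using 1 2 by (simp add: F_append distrib_left)
qed


lemma legal_bound:
  fixes \<theta> :: "'a::finite \<Rightarrow> 'a list set"
  assumes rs: "random_substitution \<theta>" and sc: "semi_compatible \<theta>"
    and prim: "primitive_matrix (subst_matrix \<theta>)"
    and rc: "\<forall>\<epsilon>>0. \<exists>k0. \<forall>k\<ge>k0. \<forall>c. \<bar>colsum (subst_matrix \<theta>) (Suc k) c / colsum (subst_matrix \<theta>) k c - lam\<bar> < \<epsilon>"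
    and lam0: "lam \<ge> 0" and dpos: "\<delta> > 0"
  shows "\<exists>L. \<forall>u\<in>language \<theta>. length u \<ge> L \<longrightarrow> \<bar>real (F \<theta> u) - lam * real (length u)\<bar> \<le> \<delta> * real (length u)"
proof -
  let ?M = "subst_matrix \<theta>"
  define K where "K = Max (range (ell1 \<theta>))"
  define d where "d = \<delta> / 2"
  have d0: "d > 0" using dpos by (simp add: d_def)
  obtain k where k: "\<forall>c. \<bar>colsum ?M (Suc k) c / colsum ?M k c - lam\<bar> < d"
    using rc d0 by blast
  have blk: "\<bar>real (F \<theta> b) - lam * real (length b)\<bar> \<le> d * real (length b)" if "b \<in> W \<theta> k [c]" for b c
  proof -
    have cp: "colsum ?M k c > 0" by (rule colsum_pos[OF prim])
    have "\<bar>colsum ?M (Suc k) c - lam * colsum ?M k c\<bar> = \<bar>colsum ?M (Suc k) c / colsum ?M k c - lam\<bar> * colsum ?M k c"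
      using cp by (simp add: field_simps abs_mult abs_of_pos)
    also have "\<dots> \<le> d * colsum ?M k c" using k[rule_format, of c] cp by (intro mult_right_mono) auto
    finally show ?thesis using W_single_len[OF rs sc that] W_single_F[OF rs sc that] by simp
  qed
  define Dk where "Dk = (\<Sum>c\<in>UNIV. \<Sum>d\<in>UNIV. mat_pow ?M k d c)"
  have blen: "length b \<le> Dk" if "b \<in> W \<theta> k [c]" for b c
  proof -
    have "length b = (\<Sum>d\<in>UNIV. mat_pow ?M k d c)"
      using W_single_count[OF rs sc that] by (simp add: length_count)
    also have "\<dots> \<le> Dk" unfolding Dk_def by (rule member_le_sum) auto
    finally show ?thesis .
  qed
  define Bk where "Bk = (\<Sum>m<k. \<Sum>a\<in>UNIV. \<Sum>d\<in>UNIV. mat_pow ?M m d a)"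
  have small: "length w \<le> Bk" if "w \<in> subst_pow \<theta> m a" "m < k" for w m a
  proof -
    have wW: "w \<in> W \<theta> m [a]" using that by (simp add: subst_pow_def W_def)
    have "length w = (\<Sum>d\<in>UNIV. mat_pow ?M m d a)"
      using W_single_count[OF rs sc wW] by (simp add: length_count)
    also have "\<dots> \<le> (\<Sum>a\<in>UNIV. \<Sum>d\<in>UNIV. mat_pow ?M m d a)" by (rule member_le_sum) auto
    also have "\<dots> \<le> Bk" unfolding Bk_def by (rule member_le_sum) (use that in auto)
    finally show ?thesis .
  qed
  define L where "L = nat \<lceil>2 * (real K + lam) * real Dk / d\<rceil> + Bk + 1"
  show ?thesis
  proof (intro exI[of _ L] ballI impI)
    fix u assume u: "u \<in> language \<theta>" and uL: "L \<le> length u"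
    from u obtain a m w where w: "w \<in> subst_pow \<theta> m a" and sub: "sublist u w"
      by (auto simp: language_def)
    have mk: "k \<le> m"
    proof (rule ccontr)
      assume "\<not> k \<le> m"
      then have "length w \<le> Bk" using small w by simp
      moreover have "length u \<le> length w" using sub by (rule sublist_length_le)
      ultimately show False using uL by (simp add: L_def)
    qed
    have fe: "(subst_set \<theta> ^^ (k + (m - k))) {[a]} = (subst_set \<theta> ^^ k) ((subst_set \<theta> ^^ (m - k)) {[a]})"
      by (simp only: funpow_add comp_apply)
    have "w \<in> (subst_set \<theta> ^^ k) ((subst_set \<theta> ^^ (m - k)) {[a]})"
      using w mk fe by (simp add: subst_pow_def)
    then obtain v where "w \<in> W \<theta> k v" by (auto simp: funpow_distrib)
    then obtain ws where ws: "w = concat ws" "\<forall>b\<in>set ws. \<exists>c. b \<in> W \<theta> k [c]"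
      using W_blocks by blast
    have wsD: "\<forall>b\<in>set ws. length b \<le> Dk" using ws(2) blen by blast
    obtain p ws' s where dec: "u = p @ concat ws' @ s" "length p \<le> Dk" "length s \<le> Dk" "set ws' \<subseteq> set ws"
      using sublist_concat[OF wsD] sub ws(1) by blast
    have cb: "\<bar>real (F \<theta> (concat ws')) - lam * real (length (concat ws'))\<bar> \<le> d * real (length (concat ws'))"
      by (rule concat_bound) (use blk dec(4) ws(2) in blast)
    have pb: "\<bar>real (F \<theta> q) - lam * real (length q)\<bar> \<le> (real K + lam) * real Dk" if "length q \<le> Dk" for q
    proof -
      have "F \<theta> q \<le> K * length q" unfolding K_def by (rule F_le)
      then have Fq: "real (F \<theta> q) \<le> real K * real (length q)" by (metis of_nat_le_iff of_nat_mult)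
      have lq: "real (length q) \<le> real Dk" using that by simp
      have "\<bar>real (F \<theta> q) - lam * real (length q)\<bar> \<le> (real K + lam) * real (length q)"
      proof -
        have "lam * real (length q) \<ge> 0" using lam0 by simp
        then show ?thesis using Fq by (simp add: abs_le_iff algebra_simps)
      qed
      also have "\<dots> \<le> (real K + lam) * real Dk" using lq lam0 by (intro mult_left_mono) auto
      finally show ?thesis .
    qed
    have big: "2 * (real K + lam) * real Dk \<le> d * real (length u)"
    proof -
      have "2 * (real K + lam) * real Dk / d \<le> real (nat \<lceil>2 * (real K + lam) * real Dk / d\<rceil>)"
      proof -
        let ?x = "2 * (real K + lam) * real Dk / d"
        have c1: "?x \<le> of_int \<lceil>?x\<rceil>" by (rule le_of_int_ceiling)
        have c2: "(of_int \<lceil>?x\<rceil> :: real) \<le> real (nat \<lceil>?x\<rceil>)" by (cases "\<lceil>?x\<rceil> \<ge> 0") simp_all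
        show ?thesis using c1 c2 by linarith
      qed
      also have "\<dots> \<le> real (length u)"
      proof -
        have "nat \<lceil>2 * (real K + lam) * real Dk / d\<rceil> \<le> length u" using uL unfolding L_def by linarith
        then show ?thesis by (simp only: of_nat_le_iff)
      qed
      finally show ?thesis using d0 by (simp add: divide_le_eq mult.commute)
    qed
    have eqF: "real (F \<theta> u) = real (F \<theta> p) + real (F \<theta> (concat ws')) + real (F \<theta> s)"
      using dec(1) by (simp add: F_append)
    have eqL: "real (length u) = real (length p) + real (length (concat ws')) + real (length s)"
      using dec(1) by simp
    have "\<bar>real (F \<theta> u) - lam * real (length u)\<bar>
        \<le> \<bar>real (F \<theta> p) - lam * real (length p)\<bar> + \<bar>real (F \<theta> (concat ws')) - lam * real (length (concat ws'))\<bar>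
           + \<bar>real (F \<theta> s) - lam * real (length s)\<bar>"
      unfolding eqF eqL distrib_left by arith
    also have "\<dots> \<le> (real K + lam) * real Dk + d * real (length (concat ws')) + (real K + lam) * real Dk"
      using pb[OF dec(2)] pb[OF dec(3)] cb by linarith
    also have "\<dots> \<le> d * real (length u) + d * real (length u)"
    proof -
      have h: "d * real (length (concat ws')) \<le> d * real (length u)" using eqL d0 by (intro mult_left_mono) auto
      have b2: "(real K + lam) * real Dk + (real K + lam) * real Dk \<le> d * real (length u)"
        using big by (simp only: mult_2 distrib_right)
      show ?thesis using h b2 by linarith
    qed
    finally show "\<bar>real (F \<theta> u) - lam * real (length u)\<bar> \<le> \<delta> * real (length u)"
      by (simp add: d_def)
  qed
qed

theorem mainTheorem5:
  fixes \<theta> :: "'a::finite \<Rightarrow> 'a list set" and eps :: real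
  defines "lam \<equiv> pf_eigenvalue (subst_matrix \<theta>)"
    and "n \<equiv> card (UNIV :: 'a set)"
    and "K \<equiv> Max (range (ell1 \<theta>))"
  assumes "random_substitution \<theta>"
    and "semi_compatible \<theta>"
    and "primitive_subst \<theta>"
    and "eps > 0"
    and "lam > eps * real n * real K"
  shows "\<exists>N0::nat. \<forall>N\<ge>N0.
           subst_set \<theta> (language \<theta>) \<inter> language_len \<theta> N \<subseteq>
           (\<Union>m \<in> {m::nat. \<lceil>real N / (lam + eps * real n * real K)\<rceil> \<le> int m
                          \<and> int m \<le> \<lfloor>real N / (lam - eps * real n * real K)\<rfloor>}.
              subst_set \<theta> (language_len \<theta> m))"
proof -
  let ?M = "subst_matrix \<theta>"
  note rs = assms(4) and sc = assms(5)
  have prim: "primitive_matrix ?M" using assms(6) by (simp add: primitive_subst_def)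
  obtain \<rho> where rc: "\<forall>\<epsilon>>0. \<exists>k0. \<forall>k\<ge>k0. \<forall>c. \<bar>colsum ?M (Suc k) c / colsum ?M k c - \<rho>\<bar> < \<epsilon>"
    using col_conv[OF prim] by blast
  obtain \<rho>' where rr: "\<forall>\<epsilon>>0. \<exists>k0. \<forall>k\<ge>k0. \<forall>c. \<bar>rowsum ?M (Suc k) c / rowsum ?M k c - \<rho>'\<bar> < \<epsilon>"
    using row_conv[OF prim] by blast
  have lam_eq: "lam = \<rho>'" unfolding lam_def by (rule pf_eq[OF prim rr])
  have rho_eq: "\<rho> = \<rho>'" by (rule rho_unique[OF prim rc rr])
  have rcl: "\<forall>\<epsilon>>0. \<exists>k0. \<forall>k\<ge>k0. \<forall>c. \<bar>colsum ?M (Suc k) c / colsum ?M k c - lam\<bar> < \<epsilon>"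
    using rc rho_eq lam_eq by simp
  have Kpos: "K > 0"
  proof -
    have "ell1 \<theta> undefined \<le> K" unfolding K_def by (rule Max_ge) auto
    then show ?thesis using ell1_pos[OF rs, of undefined] by simp
  qed
  have npos: "n > 0" unfolding n_def by simp
  define \<eta> where "\<eta> = eps * real n * real K"
  have eta0: "\<eta> > 0" using assms(7) Kpos npos by (simp add: \<eta>_def)
  have lam_gt: "lam > \<eta>" using assms(8) by (simp add: \<eta>_def)
  have lam0: "lam \<ge> 0" using lam_gt eta0 by simp
  obtain L where L: "\<forall>u\<in>language \<theta>. length u \<ge> L \<longrightarrow> \<bar>real (F \<theta> u) - lam * real (length u)\<bar> \<le> \<eta> * real (length u)"
    using legal_bound[OF rs sc prim rcl lam0 eta0] by blast
  show ?thesis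
  proof (intro exI[of _ "K * L"] allI impI subsetI)
    fix N w assume NN: "K * L \<le> N" and wI: "w \<in> subst_set \<theta> (language \<theta>) \<inter> language_len \<theta> N"
    then obtain u where u: "u \<in> language \<theta>" and wu: "w \<in> subst_word \<theta> u" and wN: "length w = N"
      by (auto simp: subst_set_def language_len_def)
    have FN: "F \<theta> u = N" using subst_length[OF rs sc wu] wN by simp
    have "F \<theta> u \<le> K * length u" unfolding K_def by (rule F_le)
    then have "K * L \<le> K * length u" using NN FN by linarith
    then have uL: "L \<le> length u" using Kpos by simp
    define m where "m = length u"
    have bd: "\<bar>real N - lam * real m\<bar> \<le> \<eta> * real m" using L u uL FN unfolding m_def by metis
    have up: "real N \<le> (lam + \<eta>) * real m" using bd by (simp add: abs_le_iff algebra_simps)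
    have lo: "(lam - \<eta>) * real m \<le> real N" using bd by (simp add: abs_le_iff algebra_simps)
    have p1: "lam + \<eta> > 0" using lam0 eta0 by simp
    have p2: "lam - \<eta> > 0" using lam_gt by simp
    have c1: "\<lceil>real N / (lam + eps * real n * real K)\<rceil> \<le> int m"
    proof -
      have "real N / (lam + \<eta>) \<le> real m" using up p1 by (simp add: divide_le_eq mult.commute)
      then show ?thesis by (simp add: \<eta>_def ceiling_le_iff)
    qed
    have c2: "int m \<le> \<lfloor>real N / (lam - eps * real n * real K)\<rfloor>"
    proof -
      have "real m \<le> real N / (lam - \<eta>)" using lo p2 by (simp add: le_divide_eq mult.commute)
      then show ?thesis by (simp add: \<eta>_def le_floor_iff)
    qed
    have "u \<in> language_len \<theta> m" using u by (simp add: language_len_def m_def)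
    then have "w \<in> subst_set \<theta> (language_len \<theta> m)" using wu by (auto simp: subst_set_def)
    then show "w \<in> (\<Union>m \<in> {m::nat. \<lceil>real N / (lam + eps * real n * real K)\<rceil> \<le> int m
                          \<and> int m \<le> \<lfloor>real N / (lam - eps * real n * real K)\<rfloor>}.
              subst_set \<theta> (language_len \<theta> m))" using c1 c2 by blast
  qed
qed

end
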